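(* For $i=1,\dots,k$, let $\mathcal{E}_i$ be Euclidean spaces and $h_i\colon \mathcal{E}_i\to\mathbb{R}^{m_i}$ be $C^\infty$ functions such that each $h_i$ satisfies assumptions (A1), (A2), (A3) (stated in the context) with constants $R_i$, $\underline{\sigma}_i$ and $C_{h_i}$ respectively. Let $\mathcal{E}=\mathcal{E}_1\times\cdots\times\mathcal{E}_k$, $m=m_1+\cdots+m_k$, and define $h\colon\mathcal{E}\to\mathbb{R}^m$ by $h(x_1,\dots,x_k)=(h_1(x_1),\dots,h_k(x_k))^\top$. Then $h$ satisfies (A1), (A2) and (A3) with constants $R=\min(R_1,\dots,R_k)$, $\underline{\sigma}=\min(\underline{\sigma}_1,\dots,\underline{\sigma}_k)$ and $C_h=\max(C_{h_1},\dots,C_{h_k})$.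
   Context: For a $C^\infty$ map $h\colon\mathcal{E}\to\mathbb{R}^m$ on a Euclidean space $\mathcal{E}$ (norm $\|\cdot\|$; on $\mathbb{R}^m$ the 2-norm), write $\mathrm{D}h(x)$ for its differential and $\sigma_{\min}(A)=\sigma_m(A)$ for the $m$-th (smallest) singular value of a linear map $A\colon\mathcal{E}\to\mathbb{R}^m$. (A1) with constants $R,\underline{\sigma}>0$: for all $x$ in $\mathcal{C}=\{x\in\mathcal{E}:\|h(x)\|\le R\}$ one has $\sigma_{\min}(\mathrm{D}h(x))\ge\underline{\sigma}$. (A2): the sets $\mathcal{M}=\{x\in\mathcal{E}:h(x)=0\}$ and $\mathcal{C}=\{x:\|h(x)\|\le R\}$ are compact. (A3) with constant $C_h>0$: for all $x\in\mathcal{C}$ and $v\in\mathcal{E}$, $h(x+v)=h(x)+\mathrm{D}h(x)[v]+E(x,v)$ with $\|E(x,v)\|\le C_h\|v\|^2$. *)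

theory Defs
  imports "HOL-Analysis.Analysis"
begin

text \<open>A Euclidean space E is modelled as a linear subspace S of an ambient type
  of class euclidean_space (with the inherited inner product); the target
  R^m (2-norm) likewise as a linear subspace T.\<close>

fun ddir :: "'a::real_normed_vector set \<Rightarrow> ('a \<Rightarrow> 'b::real_normed_vector) \<Rightarrow> 'a list \<Rightarrow> 'a \<Rightarrow> 'b" where
  "ddir S f [] = f"
| "ddir S f (v # vs) = (\<lambda>x. frechet_derivative (ddir S f vs) (at x within S) v)"

definition smooth_on :: "'a::real_normed_vector set \<Rightarrow> ('a \<Rightarrow> 'b::real_normed_vector) \<Rightarrow> bool" where
  "smooth_on S f \<longleftrightarrow> (\<forall>vs. set vs \<subseteq> S \<longrightarrow>
      continuous_on S (ddir S f vs) \<and> (\<forall>x\<in>S. ddir S f vs differentiable (at x within S)))"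

text \<open>Smallest (m-th) singular value of a linear map A : S \<rightarrow> T with dim T = m,
  via sigma_m(A) = min over unit u in T of the norm of the adjoint A* u,
  the latter being sup over v in S with norm v \<le> 1 of |u \<bullet> A v|.\<close>
definition sigma_min :: "'a::real_inner set \<Rightarrow> 'b::real_inner set \<Rightarrow> ('a \<Rightarrow> 'b) \<Rightarrow> real" where
  "sigma_min S T A = Inf {Sup {\<bar>u \<bullet> A v\<bar> | v. v \<in> S \<and> norm v \<le> 1} | u. u \<in> T \<and> norm u = 1}"

definition Dh :: "'a::real_normed_vector set \<Rightarrow> ('a \<Rightarrow> 'b::real_normed_vector) \<Rightarrow> 'a \<Rightarrow> 'a \<Rightarrow> 'b" where
  "Dh S h x = frechet_derivative h (at x within S)"

definition A1 :: "'a::real_inner set \<Rightarrow> 'b::real_inner set \<Rightarrow> ('a \<Rightarrow> 'b) \<Rightarrow> real \<Rightarrow> real \<Rightarrow> bool" where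
  "A1 S T h R \<sigma> \<longleftrightarrow> R > 0 \<and> \<sigma> > 0 \<and>
     (\<forall>x\<in>S. norm (h x) \<le> R \<longrightarrow> sigma_min S T (Dh S h x) \<ge> \<sigma>)"

definition A2 :: "'a::real_normed_vector set \<Rightarrow> ('a \<Rightarrow> 'b::real_normed_vector) \<Rightarrow> real \<Rightarrow> bool" where
  "A2 S h R \<longleftrightarrow> compact {x \<in> S. h x = 0} \<and> compact {x \<in> S. norm (h x) \<le> R}"

definition A3 :: "'a::real_normed_vector set \<Rightarrow> ('a \<Rightarrow> 'b::real_normed_vector) \<Rightarrow> real \<Rightarrow> real \<Rightarrow> bool" where
  "A3 S h R C \<longleftrightarrow> C > 0 \<and>
     (\<forall>x\<in>S. norm (h x) \<le> R \<longrightarrow> (\<forall>v\<in>S.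
        norm (h (x + v) - h x - Dh S h x v) \<le> C * (norm v)\<^sup>2))"

end

theory Submission
  imports Defs
begin

lemma vec_lambda_sum_axis:
  "(\<chi> i. f i) = (\<Sum>j\<in>UNIV. axis j (f j))"
  by (simp add: vec_eq_iff axis_def sum_component if_distrib cong: if_cong)

lemma norm_axis_eq: "norm (axis j (x::'a::real_normed_vector) :: 'a^'k::finite) = norm x"
proof -
  have E: "(\<lambda>i. (norm (axis j x $ i))\<^sup>2) = (\<lambda>i. if i = j then (norm x)\<^sup>2 else 0)"
    by (auto simp: axis_def)
  then have "(\<Sum>i\<in>UNIV. (norm (axis j x $ i))\<^sup>2) = (norm x)\<^sup>2" by (simp only: E) simp
  then show ?thesis unfolding norm_vec_def L2_set_def by simp
qed

lemma bounded_linear_axis: "bounded_linear (axis j :: 'a::real_normed_vector \<Rightarrow> 'a^'k::finite)"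
  by (rule bounded_linear_intro[where K=1]) (auto simp: vec_eq_iff axis_def norm_axis_eq[unfolded axis_def])

lemma has_derivative_vec_lambda:
  fixes g :: "'k::finite \<Rightarrow> 'a::real_normed_vector \<Rightarrow> 'b::real_normed_vector"
  assumes "\<And>i. (g i has_derivative g' i) F"
  shows "((\<lambda>x. \<chi> i. g i x) has_derivative (\<lambda>v. \<chi> i. g' i v)) F"
proof -
  have "((\<lambda>x. \<Sum>j\<in>UNIV. axis j (g j x)) has_derivative (\<lambda>v. \<Sum>j\<in>UNIV. axis j (g' j v))) F"
    by (intro has_derivative_sum bounded_linear.has_derivative[OF bounded_linear_axis] assms)
  then show ?thesis by (simp add: vec_lambda_sum_axis)
qed

lemma deriv_within_subspace_unique:
  assumes S: "subspace S" and x: "x \<in> S" and v: "v \<in> S"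
    and d1: "(f has_derivative D1) (at x within S)"
    and d2: "(f has_derivative D2) (at x within S)"
  shows "D1 v = D2 v"
proof -
  define g where "g = (\<lambda>t::real. x + t *\<^sub>R v)"
  have gd: "(g has_derivative (\<lambda>t. t *\<^sub>R v)) (at 0)"
    unfolding g_def by (auto intro!: derivative_eq_intros)
  have gS: "g ` UNIV \<subseteq> S" unfolding g_def using S x v
    by (auto intro: subspace_add subspace_scale)
  have g0: "g 0 = x" by (simp add: g_def)
  have "((f \<circ> g) has_derivative (D1 \<circ> (\<lambda>t. t *\<^sub>R v))) (at 0)"
    using diff_chain_within[OF gd] has_derivative_subset[OF d1 gS] g0
    by simp
  moreover have "((f \<circ> g) has_derivative (D2 \<circ> (\<lambda>t. t *\<^sub>R v))) (at 0)"
    using diff_chain_within[OF gd] has_derivative_subset[OF d2 gS] g0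
    by simp
  ultimately have "D1 \<circ> (\<lambda>t. t *\<^sub>R v) = D2 \<circ> (\<lambda>t. t *\<^sub>R v)"
    by (rule has_derivative_unique)
  then show ?thesis by (metis comp_apply scale_one)
qed

lemma norm_sq_vec: "(norm (x::'a::real_normed_vector^'k::finite))\<^sup>2 = (\<Sum>i\<in>UNIV. (norm (x$i))\<^sup>2)"
  unfolding norm_vec_def L2_set_def by (simp add: sum_nonneg)

lemma sup_bdd:
  assumes "bounded_linear A"
  shows "bdd_above {\<bar>u \<bullet> A v\<bar> | v. v \<in> S \<and> norm v \<le> 1}"
proof -
  obtain K where K: "K > 0" "\<And>x. norm (A x) \<le> norm x * K"
    using bounded_linear.pos_bounded[OF assms] by blast
  have "\<bar>u \<bullet> A v\<bar> \<le> norm u * K" if "norm v \<le> 1" for v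
  proof -
    have "\<bar>u \<bullet> A v\<bar> \<le> norm u * norm (A v)" by (rule Cauchy_Schwarz_ineq2)
    also have "\<dots> \<le> norm u * (norm v * K)" using K by (simp add: mult_left_mono)
    also have "\<dots> \<le> norm u * K" using that K by (simp add: mult_left_mono mult_right_le_one_le)
    finally show ?thesis .
  qed
  then show ?thesis by (auto intro!: bdd_aboveI)
qed

lemma sup_nonneg:
  assumes "bounded_linear A" "0 \<in> S"
  shows "0 \<le> Sup {\<bar>u \<bullet> A v\<bar> | v. v \<in> S \<and> norm v \<le> 1}"
proof -
  have "\<bar>u \<bullet> A 0\<bar> \<in> {\<bar>u \<bullet> A v\<bar> | v. v \<in> S \<and> norm v \<le> 1}" using assms by auto
  then have "\<bar>u \<bullet> A 0\<bar> \<le> Sup {\<bar>u \<bullet> A v\<bar> | v. v \<in> S \<and> norm v \<le> 1}"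
    by (rule cSup_upper[OF _ sup_bdd[OF assms(1)]])
  then show ?thesis using linear_0[OF bounded_linear.linear[OF assms(1)]] by simp
qed

lemma sigma_unit:
  assumes "bounded_linear A" "0 \<in> S" "s \<le> sigma_min S T A" "u \<in> T" "norm u = 1"
  shows "s \<le> Sup {\<bar>u \<bullet> A v\<bar> | v. v \<in> S \<and> norm v \<le> 1}"
proof -
  let ?Y = "{Sup {\<bar>u \<bullet> A v\<bar> | v. v \<in> S \<and> norm v \<le> 1} | u. u \<in> T \<and> norm u = 1}"
  have "bdd_below ?Y" using sup_nonneg[OF assms(1,2)] by (auto intro!: bdd_belowI[where m=0])
  moreover have "Sup {\<bar>u \<bullet> A v\<bar> | v. v \<in> S \<and> norm v \<le> 1} \<in> ?Y" using assms by auto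
  ultimately have "Inf ?Y \<le> Sup {\<bar>u \<bullet> A v\<bar> | v. v \<in> S \<and> norm v \<le> 1}"
    by (rule cInf_lower[rotated])
  then show ?thesis using assms(3) unfolding sigma_min_def by linarith
qed

lemma sup_ge_eps:
  fixes X :: "real set"
  assumes "bdd_above X" "\<And>e. e > 0 \<Longrightarrow> \<exists>x\<in>X. s - e \<le> x"
  shows "s \<le> Sup X"
proof (rule field_le_epsilon)
  fix e :: real assume "e > 0"
  then obtain x where "x \<in> X" "s - e \<le> x" using assms(2) by blast
  then have "s - e \<le> Sup X" using cSup_upper[OF _ assms(1)] by force
  then show "s \<le> Sup X + e" by simp
qed

theorem mainTheorem1:
  fixes S :: "'k::finite \<Rightarrow> 'a::euclidean_space set"
    and T :: "'k \<Rightarrow> 'b::euclidean_space set"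
    and hh :: "'k \<Rightarrow> 'a \<Rightarrow> 'b"
    and R sig C :: "'k \<Rightarrow> real"
  assumes "\<And>i. subspace (S i)"
    and "\<And>i. subspace (T i)"
    and "\<And>i. T i \<noteq> {0}"
    and "\<And>i. hh i ` S i \<subseteq> T i"
    and "\<And>i. smooth_on (S i) (hh i)"
    and "\<And>i. A1 (S i) (T i) (hh i) (R i) (sig i)"
    and "\<And>i. A2 (S i) (hh i) (R i)"
    and "\<And>i. A3 (S i) (hh i) (R i) (C i)"
  defines "SE \<equiv> {x :: 'a ^ 'k. \<forall>i. x $ i \<in> S i}"
    and "TE \<equiv> {y :: 'b ^ 'k. \<forall>i. y $ i \<in> T i}"
    and "h \<equiv> (\<lambda>x :: 'a ^ 'k. \<chi> i. hh i (x $ i))"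
  shows "A1 SE TE h (MIN i. R i) (MIN i. sig i)
       \<and> A2 SE h (MIN i. R i)
       \<and> A3 SE h (MIN i. R i) (MAX i. C i)"
proof -
  note Ssub = assms(1) and Tsub = assms(2) and Tne = assms(3)
  define Rm where "Rm = (MIN i. R i)"
  define sm where "sm = (MIN i. sig i)"
  define Cm where "Cm = (MAX i. C i)"
  have Rpos: "\<And>i. R i > 0" and sigpos: "\<And>i. sig i > 0"
    and A1i: "\<And>i y. y \<in> S i \<Longrightarrow> norm (hh i y) \<le> R i \<Longrightarrow> sigma_min (S i) (T i) (Dh (S i) (hh i) y) \<ge> sig i"
    using assms(6) unfolding A1_def by auto
  have Cpos: "\<And>i. C i > 0"
    and A3i: "\<And>i y w. y \<in> S i \<Longrightarrow> norm (hh i y) \<le> R i \<Longrightarrow> w \<in> S i \<Longrightarrow>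
        norm (hh i (y + w) - hh i y - Dh (S i) (hh i) y w) \<le> C i * (norm w)\<^sup>2"
    using assms(8) unfolding A3_def by auto
  have Rm_le: "\<And>i. Rm \<le> R i" unfolding Rm_def by simp
  have sm_le: "\<And>i. sm \<le> sig i" unfolding sm_def by simp
  have Cm_ge: "\<And>i. C i \<le> Cm" unfolding Cm_def by simp
  have Rm_pos: "Rm > 0" unfolding Rm_def using Rpos by simp
  have sm_pos: "sm > 0" unfolding sm_def using sigpos by simp
  have Cm_pos: "Cm > 0" using Cm_ge Cpos by (meson less_le_trans)
  have hcomp: "\<And>(x::'a^'k) i. h x $ i = hh i (x $ i)" unfolding h_def by simp
  have diffi: "\<And>i y. y \<in> S i \<Longrightarrow> hh i differentiable (at y within S i)"
    and conti: "\<And>i. continuous_on (S i) (hh i)"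
    using assms(5) unfolding smooth_on_def by (metis ddir.simps(1) empty_set empty_subsetI)+
  have hasDi: "\<And>i y. y \<in> S i \<Longrightarrow> (hh i has_derivative Dh (S i) (hh i) y) (at y within S i)"
    using diffi frechet_derivative_works unfolding Dh_def by blast
  have linDi: "\<And>i y. y \<in> S i \<Longrightarrow> linear (Dh (S i) (hh i) y)"
    using hasDi has_derivative_linear by blast
  have SEsub: "subspace SE"
    unfolding subspace_def SE_def using Ssub by (auto intro: subspace_0 subspace_add subspace_scale)
  have SEmem: "\<And>x i. x \<in> SE \<Longrightarrow> x $ i \<in> S i" unfolding SE_def by simp
  have hasD: "(h has_derivative (\<lambda>v. \<chi> i. Dh (S i) (hh i) (x$i) (v$i))) (at x within SE)"
    if x: "x \<in> SE" for x
    unfolding h_def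
  proof (rule has_derivative_vec_lambda)
    fix i
    have d1: "((\<lambda>x. x $ i) has_derivative (\<lambda>v. v $ i)) (at x within SE)"
      by (rule bounded_linear.has_derivative[OF bounded_linear_vec_nth]) (rule has_derivative_ident)
    have "(\<lambda>x. x $ i) ` SE \<subseteq> S i" using SEmem by auto
    then have d2: "(hh i has_derivative Dh (S i) (hh i) (x$i)) (at (x$i) within (\<lambda>x. x $ i) ` SE)"
      using has_derivative_subset hasDi SEmem x by blast
    show "((\<lambda>x. hh i (x $ i)) has_derivative (\<lambda>v. Dh (S i) (hh i) (x $ i) (v $ i))) (at x within SE)"
      using diff_chain_within[OF d1 d2] by (simp add: o_def)
  qed
  have DhE: "Dh SE h x v = (\<chi> i. Dh (S i) (hh i) (x$i) (v$i))" if "x \<in> SE" "v \<in> SE" for x v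
  proof -
    have "(h has_derivative Dh SE h x) (at x within SE)"
      using hasD[OF that(1)] frechet_derivative_works differentiable_def unfolding Dh_def by blast
    from deriv_within_subspace_unique[OF SEsub that this hasD[OF that(1)]] show ?thesis .
  qed
  have blE: "bounded_linear (Dh SE h x)" if "x \<in> SE" for x
    using hasD[OF that] frechet_derivative_works differentiable_def has_derivative_bounded_linear
    unfolding Dh_def by blast
  have blDi: "\<And>i y. y \<in> S i \<Longrightarrow> bounded_linear (Dh (S i) (hh i) y)"
    using hasDi has_derivative_bounded_linear by blast
  have compR: "norm (hh i (x$i)) \<le> R i" if "norm (h x) \<le> Rm" for x i
  proof -
    have "norm (h x $ i) \<le> norm (h x)" by (rule Finite_Cartesian_Product.norm_nth_le)
    then show ?thesis using hcomp[of x i] Rm_le[of i] that by simp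
  qed
  have partA3: "A3 SE h Rm Cm"
    unfolding A3_def
  proof (intro conjI Cm_pos ballI impI)
    fix x v assume x: "x \<in> SE" and hx: "norm (h x) \<le> Rm" and v: "v \<in> SE"
    have xv: "x + v \<in> SE" using SEsub x v by (rule subspace_add)
    have eq: "h (x + v) - h x - Dh SE h x v
        = (\<chi> i. hh i (x$i + v$i) - hh i (x$i) - Dh (S i) (hh i) (x$i) (v$i))"
      using DhE[OF x v] by (simp add: vec_eq_iff hcomp)
    have ci: "norm (hh i (x$i + v$i) - hh i (x$i) - Dh (S i) (hh i) (x$i) (v$i)) \<le> Cm * (norm (v$i))\<^sup>2" for i
    proof -
      have "norm (hh i (x$i + v$i) - hh i (x$i) - Dh (S i) (hh i) (x$i) (v$i)) \<le> C i * (norm (v$i))\<^sup>2"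
        using A3i[OF SEmem[OF x] compR[OF hx] SEmem[OF v]] .
      also have "\<dots> \<le> Cm * (norm (v$i))\<^sup>2" using Cm_ge[of i] by (simp add: mult_right_mono)
      finally show ?thesis .
    qed
    have "norm (h (x + v) - h x - Dh SE h x v) \<le> L2_set (\<lambda>i. Cm * (norm (v$i))\<^sup>2) UNIV"
      unfolding eq norm_vec_def by (rule L2_set_mono) (use ci in auto)
    also have "\<dots> \<le> (\<Sum>i\<in>UNIV. Cm * (norm (v$i))\<^sup>2)"
      by (rule L2_set_le_sum) (use Cm_pos in simp)
    also have "\<dots> = Cm * (norm v)\<^sup>2" by (simp add: norm_sq_vec sum_distrib_left)
    finally show "norm (h (x + v) - h x - Dh SE h x v) \<le> Cm * (norm v)\<^sup>2" .
  qed
  have SEclosed: "closed SE"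
    unfolding SE_def
  proof (rule closed_Collect_all)
    fix i
    have "closed ((\<lambda>x::'a^'k. x $ i) -` S i)"
      by (rule continuous_closed_vimage) (auto intro: closed_subspace Ssub continuous_intros)
    then show "closed {x::'a^'k. x $ i \<in> S i}" by (simp add: vimage_def)
  qed
  have hcont: "continuous_on SE h"
    unfolding h_def
  proof (rule continuous_on_vec_lambda)
    fix i
    show "continuous_on SE (\<lambda>x. hh i (x $ i))"
      by (rule continuous_on_compose2[OF conti[of i]]) (auto intro: continuous_intros SEmem)
  qed
  have bprod: "bounded {x::'a^'k. \<forall>i. x $ i \<in> K i}" if "\<And>i. bounded (K i)" for K
  proof -
    have "\<forall>i. \<exists>b. \<forall>y\<in>K i. norm y \<le> b" using that bounded_iff by blast
    then obtain B where B: "\<And>i y. y \<in> K i \<Longrightarrow> norm y \<le> B i" by metis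
    have "norm x \<le> (\<Sum>i\<in>UNIV. B i)" if "\<forall>i. x $ i \<in> K i" for x :: "'a^'k"
    proof -
      have "norm x \<le> (\<Sum>i\<in>UNIV. norm (x$i))" unfolding norm_vec_def by (rule L2_set_le_sum) simp
      also have "\<dots> \<le> (\<Sum>i\<in>UNIV. B i)" by (rule sum_mono) (use B that in auto)
      finally show ?thesis .
    qed
    then show ?thesis unfolding bounded_iff by blast
  qed
  have partA2: "A2 SE h Rm"
    unfolding A2_def
  proof
    have cl: "closed (SE \<inter> h -` {0})" by (rule continuous_closed_preimage[OF hcont SEclosed]) simp
    have "{x \<in> SE. h x = 0} \<subseteq> {x. \<forall>i. x $ i \<in> {y \<in> S i. hh i y = 0}}"
      by (auto simp: SEmem vec_eq_iff hcomp)
    moreover have "bounded {x. \<forall>i. x $ i \<in> {y \<in> S i. hh i y = 0}}"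
      by (rule bprod) (use assms(7) in \<open>auto simp: A2_def compact_eq_bounded_closed\<close>)
    ultimately have "bounded {x \<in> SE. h x = 0}" using bounded_subset by blast
    moreover have "{x \<in> SE. h x = 0} = SE \<inter> h -` {0}" by auto
    ultimately show "compact {x \<in> SE. h x = 0}" using cl compact_eq_bounded_closed by metis
  next
    have cl: "closed (SE \<inter> h -` cball 0 Rm)" by (rule continuous_closed_preimage[OF hcont SEclosed]) simp
    have "{x \<in> SE. norm (h x) \<le> Rm} \<subseteq> {x. \<forall>i. x $ i \<in> {y \<in> S i. norm (hh i y) \<le> R i}}"
      using compR SEmem by auto
    moreover have "bounded {x. \<forall>i. x $ i \<in> {y \<in> S i. norm (hh i y) \<le> R i}}"
      by (rule bprod) (use assms(7) in \<open>auto simp: A2_def compact_eq_bounded_closed\<close>)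
    ultimately have "bounded {x \<in> SE. norm (h x) \<le> Rm}" using bounded_subset by blast
    moreover have "{x \<in> SE. norm (h x) \<le> Rm} = SE \<inter> h -` cball 0 Rm" by auto
    ultimately show "compact {x \<in> SE. norm (h x) \<le> Rm}" using cl compact_eq_bounded_closed by metis
  qed
  have partA1: "A1 SE TE h Rm sm"
    unfolding A1_def
  proof (intro conjI Rm_pos sm_pos ballI impI)
    fix x assume x: "x \<in> SE" and hx: "norm (h x) \<le> Rm"
    define A where "A = Dh SE h x"
    define Ai where "Ai i = Dh (S i) (hh i) (x$i)" for i
    have Av: "\<And>v. v \<in> SE \<Longrightarrow> A v = (\<chi> i. Ai i (v$i))" unfolding A_def Ai_def using DhE[OF x] by blast
    have blA: "bounded_linear A" unfolding A_def using blE[OF x] .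
    have linAi: "\<And>i. linear (Ai i)" unfolding Ai_def using linDi SEmem[OF x] by blast
    have blAi: "\<And>i. bounded_linear (Ai i)" unfolding Ai_def using blDi SEmem[OF x] by blast
    have sigAi: "\<And>i. sig i \<le> sigma_min (S i) (T i) (Ai i)"
      unfolding Ai_def using A1i SEmem[OF x] compR[OF hx] by blast
    show "sm \<le> sigma_min SE TE (Dh SE h x)"
      unfolding sigma_min_def A_def[symmetric]
    proof (rule cInf_greatest)
      obtain i0 :: 'k where True by simp
      obtain t where t: "t \<in> T i0" "t \<noteq> 0"
        using Tne[of i0] subspace_0[OF Tsub[of i0]] by blast
      define u0 where "u0 = (axis i0 (t /\<^sub>R norm t) :: 'b^'k)"
      have "u0 \<in> TE" unfolding u0_def TE_def axis_def
        using t Tsub by (auto intro: subspace_0 subspace_scale)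
      moreover have "norm u0 = 1" unfolding u0_def norm_axis_eq using t by simp
      ultimately show "{Sup {\<bar>u \<bullet> A v\<bar> |v. v \<in> SE \<and> norm v \<le> 1} |u. u \<in> TE \<and> norm u = 1} \<noteq> {}"
        by blast
    next
      fix y assume "y \<in> {Sup {\<bar>u \<bullet> A v\<bar> |v. v \<in> SE \<and> norm v \<le> 1} |u. u \<in> TE \<and> norm u = 1}"
      then obtain u where u: "u \<in> TE" "norm u = 1"
        and y: "y = Sup {\<bar>u \<bullet> A v\<bar> |v. v \<in> SE \<and> norm v \<le> 1}" by blast
      have uT: "\<And>i. u $ i \<in> T i" using u(1) unfolding TE_def by simp
      show "sm \<le> y" unfolding y
      proof (rule sup_ge_eps[OF sup_bdd[OF blA]])
        fix e :: real assume e: "e > 0"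
        have "\<exists>w. w \<in> S i \<and> norm w \<le> 1 \<and> norm (u$i) * (sig i - e) \<le> u$i \<bullet> Ai i w" for i
        proof (cases "u $ i = 0")
          case True
          then show ?thesis using subspace_0[OF Ssub[of i]] by (intro exI[of _ 0]) simp
        next
          case False
          define u' where "u' = u$i /\<^sub>R norm (u$i)"
          have u'T: "u' \<in> T i" unfolding u'_def using uT Tsub by (auto intro: subspace_scale)
          have u'n: "norm u' = 1" unfolding u'_def using False by simp
          have ui: "u$i = norm (u$i) *\<^sub>R u'" unfolding u'_def using False by simp
          have "sig i \<le> Sup {\<bar>u' \<bullet> Ai i v\<bar> |v. v \<in> S i \<and> norm v \<le> 1}"
            by (rule sigma_unit[OF blAi subspace_0[OF Ssub[of i]] sigAi u'T u'n])
          then have lt: "sig i - e < Sup {\<bar>u' \<bullet> Ai i v\<bar> |v. v \<in> S i \<and> norm v \<le> 1}" using e by linarith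
          have ne: "{\<bar>u' \<bullet> Ai i v\<bar> |v. v \<in> S i \<and> norm v \<le> 1} \<noteq> {}"
            using subspace_0[OF Ssub[of i]] by force
          obtain z where "z \<in> {\<bar>u' \<bullet> Ai i v\<bar> |v. v \<in> S i \<and> norm v \<le> 1}" "sig i - e < z"
            using less_cSupD[OF ne lt] by blast
          then obtain w where w: "w \<in> S i" "norm w \<le> 1" "sig i - e < \<bar>u' \<bullet> Ai i w\<bar>"
            by blast
          have nn: "norm (u$i) \<ge> 0" by simp
          show ?thesis
          proof (cases "u' \<bullet> Ai i w \<ge> 0")
            case True
            have "u$i \<bullet> Ai i w = norm (u$i) * (u' \<bullet> Ai i w)" by (subst ui) simp
            moreover have "norm (u$i) * (sig i - e) \<le> norm (u$i) * (u' \<bullet> Ai i w)"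
              using w(3) True nn by (intro mult_left_mono) auto
            ultimately show ?thesis using w by (intro exI[of _ w]) simp
          next
            case False
            have "u$i \<bullet> Ai i (- w) = norm (u$i) * (- (u' \<bullet> Ai i w))"
              by (subst ui) (simp add: linear_neg[OF linAi])
            moreover have "norm (u$i) * (sig i - e) \<le> norm (u$i) * (- (u' \<bullet> Ai i w))"
              using w(3) False nn by (intro mult_left_mono) auto
            moreover have "- w \<in> S i" using w(1) Ssub by (simp add: subspace_neg)
            ultimately show ?thesis using w by (intro exI[of _ "- w"]) simp
          qed
        qed
        then obtain w where w: "\<And>i. w i \<in> S i" "\<And>i. norm (w i) \<le> 1"
          "\<And>i. norm (u$i) * (sig i - e) \<le> u$i \<bullet> Ai i (w i)" by metis
        define v where "v = (\<chi> i. norm (u$i) *\<^sub>R w i)"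
        have vSE: "v \<in> SE" unfolding v_def SE_def using w(1) Ssub by (auto intro: subspace_scale)
        have "(norm v)\<^sup>2 = (\<Sum>i\<in>UNIV. (norm (u$i) * norm (w i))\<^sup>2)"
          unfolding norm_sq_vec v_def by simp
        also have "\<dots> \<le> (\<Sum>i\<in>UNIV. (norm (u$i))\<^sup>2)"
        proof (rule sum_mono)
          fix i
          have "norm (u$i) * norm (w i) \<le> norm (u$i)" using w(2)[of i] by (simp add: mult_left_le)
          then show "(norm (u$i) * norm (w i))\<^sup>2 \<le> (norm (u$i))\<^sup>2"
            by (simp add: power_mono)
        qed
        also have "\<dots> = 1" using u(2) norm_sq_vec[of u] by simp
        finally have vn: "norm v \<le> 1" by (simp add: power_le_one_iff)
        have "u \<bullet> A v = (\<Sum>i\<in>UNIV. u$i \<bullet> Ai i (norm (u$i) *\<^sub>R w i))"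
          using Av[OF vSE] by (simp add: inner_vec_def v_def)
        also have "\<dots> = (\<Sum>i\<in>UNIV. norm (u$i) * (u$i \<bullet> Ai i (w i)))"
          by (simp add: linear_scale[OF linAi])
        also have "\<dots> \<ge> (\<Sum>i\<in>UNIV. (norm (u$i))\<^sup>2 * (sm - e))"
        proof (rule sum_mono)
          fix i
          have "(norm (u$i))\<^sup>2 * (sm - e) \<le> norm (u$i) * (norm (u$i) * (sig i - e))"
          proof -
            have "(norm (u$i))\<^sup>2 * (sm - e) \<le> (norm (u$i))\<^sup>2 * (sig i - e)"
              using sm_le[of i] by (intro mult_left_mono) auto
            then show ?thesis by (simp add: power2_eq_square mult.assoc)
          qed
          also have "\<dots> \<le> norm (u$i) * (u$i \<bullet> Ai i (w i))"
            using w(3)[of i] by (simp add: mult_left_mono)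
          finally show "(norm (u$i))\<^sup>2 * (sm - e) \<le> norm (u$i) * (u$i \<bullet> Ai i (w i))" .
        qed
        finally have "(\<Sum>i\<in>UNIV. (norm (u$i))\<^sup>2) * (sm - e) \<le> u \<bullet> A v"
          by (simp add: sum_distrib_right)
        then have "sm - e \<le> \<bar>u \<bullet> A v\<bar>" using u(2) norm_sq_vec[of u] by simp
        then show "\<exists>z\<in>{\<bar>u \<bullet> A v\<bar> |v. v \<in> SE \<and> norm v \<le> 1}. sm - e \<le> z"
          using vSE vn by blast
      qed
    qed
  qed
  show ?thesis using partA1 partA2 partA3 unfolding Rm_def sm_def Cm_def by blast
qed

end
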